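(* Let $g$ be the Lorentzian form on $\mathbb{R}^4$ with matrix $\mathrm{diag}(1,1,1,-c^2)$, $\mathcal{L}^{\uparrow}_+$ its proper orthochronous Lorentz group, and $u$ a timelike vector. Let $H(u)=\{L\in\mathcal{L}^{\uparrow}_+ : Lu=u\}$ and let $(\mathcal{P}^{\uparrow}_+)_X$ be the group of maps $x\mapsto Lx+b$ with $L\in H(u)$, $b\in\mathbb{R}^4$. Let $CH(u)$ be the set of $M\in\mathbb{R}^+\mathcal{L}^{\uparrow}_+=\{\mu L:\mu>0, L\in\mathcal{L}^{\uparrow}_+\}$ with $M(\langle u\rangle)=\langle u\rangle$, where $\langle u\rangle$ is the line spanned by $u$, and let $C(\mathcal{P}^{\uparrow}_+)_X$ be the group of maps $x\mapsto Mx+b$ with $M\in CH(u)$, $b\in\mathbb{R}^4$. Let $\langle u\rangle^\perp=\{v: g(v,u)=0\}$. (A) An equivalence relation on $\mathbb{R}^4$ is $(\mathcal{P}^{\uparrow}_+)_X$-invariant if and only if there is an additive subgroup $H$ of $\mathbb{R}$ such that either (i) $[x]=x+Hu$ for all $x$, or (ii) $[x]=x+(\langle u\rangle^\perp+Hu)$ for all $x$. (B) The standard synchrony $R_u$, defined by $x\,R_u\,y\iff g(x-y,u)=0$, is the only nontrivial $C(\mathcal{P}^{\uparrow}_+)_X$-invariant equivalence relation on $\mathbb{R}^4$ whose equivalence classes are not worldlines (i.e. not the lines $x+\mathbb{R}u$).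
   Context: An equivalence relation is invariant under a group of transformations if $x\sim y$ implies $h(x)\sim h(y)$ for all $x,y$ and all $h$ in the group. It is trivial if it is the total relation or the identity relation (diagonal). A vector $u$ is timelike if $g(u,u)<0$. *)

theory Defs
  imports "HOL-Analysis.Analysis"
begin

text \<open>Coordinates of real^4 are indexed by the type 4 = {0,1,2,3};
  indices 0,1,2 are spatial and index 3 is the time coordinate.\<close>

definition lor :: "real \<Rightarrow> real^4 \<Rightarrow> real^4 \<Rightarrow> real" where
  "lor c x y = x$0 * y$0 + x$1 * y$1 + x$2 * y$2 - c^2 * (x$3 * y$3)"

definition timelike :: "real \<Rightarrow> real^4 \<Rightarrow> bool" where
  "timelike c u \<longleftrightarrow> lor c u u < 0"

definition lorentz_po :: "real \<Rightarrow> (real^4^4) set" where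
  "lorentz_po c = {L. (\<forall>x y. lor c (L *v x) (L *v y) = lor c x y) \<and> det L = 1 \<and> L$3$3 > 0}"

definition stab :: "real \<Rightarrow> real^4 \<Rightarrow> (real^4^4) set" where
  "stab c u = {L \<in> lorentz_po c. L *v u = u}"

definition poinc_X :: "real \<Rightarrow> real^4 \<Rightarrow> (real^4 \<Rightarrow> real^4) set" where
  "poinc_X c u = {(\<lambda>x. L *v x + b) | L b. L \<in> stab c u}"

definition line :: "real^4 \<Rightarrow> (real^4) set" where
  "line u = {t *\<^sub>R u | t. True}"

definition conf_stab :: "real \<Rightarrow> real^4 \<Rightarrow> (real^4^4) set" where
  "conf_stab c u = {M. (\<exists>\<mu> L. \<mu> > 0 \<and> L \<in> lorentz_po c \<and> M = \<mu> *\<^sub>R L)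
                       \<and> (\<lambda>x. M *v x) ` line u = line u}"

definition conf_poinc_X :: "real \<Rightarrow> real^4 \<Rightarrow> (real^4 \<Rightarrow> real^4) set" where
  "conf_poinc_X c u = {(\<lambda>x. M *v x + b) | M b. M \<in> conf_stab c u}"

definition invariant_under :: "('a \<Rightarrow> 'a) set \<Rightarrow> 'a rel \<Rightarrow> bool" where
  "invariant_under G R \<longleftrightarrow> (\<forall>h\<in>G. \<forall>x y. (x, y) \<in> R \<longrightarrow> (h x, h y) \<in> R)"

definition trivial_rel :: "'a rel \<Rightarrow> bool" where
  "trivial_rel R \<longleftrightarrow> R = UNIV \<or> R = Id"

definition add_subgroup :: "real set \<Rightarrow> bool" where
  "add_subgroup H \<longleftrightarrow> 0 \<in> H \<and> (\<forall>a\<in>H. \<forall>b\<in>H. a + b \<in> H) \<and> (\<forall>a\<in>H. - a \<in> H)"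

definition orth :: "real \<Rightarrow> real^4 \<Rightarrow> (real^4) set" where
  "orth c u = {v. lor c v u = 0}"

definition std_sync :: "real \<Rightarrow> real^4 \<Rightarrow> (real^4) rel" where
  "std_sync c u = {(x, y). lor c (x - y) u = 0}"

end

theory Submission
  imports Defs
begin

lemma UNIV4': "UNIV = {0::4, 1, 2, 3}"
  using UNIV_4 by auto
lemma sum4: "(\<Sum>i\<in>(UNIV::4 set). f i) = f 0 + f 1 + f 2 + f 3"
  unfolding UNIV4' by (simp add: algebra_simps)
lemma vec4_eq: "(x::'a^4) = y \<longleftrightarrow> x$0 = y$0 \<and> x$1 = y$1 \<and> x$2 = y$2 \<and> x$3 = y$3"
  unfolding vec_eq_iff UNIV4'[symmetric] using UNIV4' by (metis UNIV_I insertE singletonD)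
lemma lor_sym: "lor c x y = lor c y x" by (simp add: lor_def algebra_simps)
lemma lor_add_left: "lor c (x + y) z = lor c x z + lor c y z" by (simp add: lor_def algebra_simps)
lemma lor_add_right: "lor c z (x + y) = lor c z x + lor c z y" by (simp add: lor_def algebra_simps)
lemma lor_diff_left: "lor c (x - y) z = lor c x z - lor c y z" by (simp add: lor_def algebra_simps)
lemma lor_diff_right: "lor c z (x - y) = lor c z x - lor c z y" by (simp add: lor_def algebra_simps)
lemma lor_scale_left: "lor c (a *\<^sub>R x) z = a * lor c x z" by (simp add: lor_def algebra_simps)
lemma lor_scale_right: "lor c z (a *\<^sub>R x) = a * lor c z x" by (simp add: lor_def algebra_simps)
lemma lor_neg_left: "lor c (- x) z = - lor c x z" by (simp add: lor_def algebra_simps)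
lemma lor_neg_right: "lor c z (- x) = - lor c z x" by (simp add: lor_def algebra_simps)
lemma lor_zero_left: "lor c 0 z = 0" by (simp add: lor_def)
lemma lor_zero_right: "lor c z 0 = 0" by (simp add: lor_def)

lemmas lor_simps = lor_add_left lor_add_right lor_diff_left lor_diff_right lor_scale_left
  lor_scale_right lor_neg_left lor_neg_right lor_zero_left lor_zero_right

definition gm :: "real \<Rightarrow> real^4 \<Rightarrow> real^4" where
  "gm c v = (\<chi> i. (if i = 3 then -(c^2) else 1) * v$i)"

lemma inner_gm: "inner x (gm c v) = lor c x v"
  unfolding inner_vec_def sum4 gm_def lor_def by simp

lemma perp_exists:
  fixes c :: real and u y :: "real^4"
  obtains n where "n \<noteq> 0" "lor c n u = 0" "lor c n y = 0"
proof -
  have "dim {gm c u, gm c y} \<le> card {gm c u, gm c y}"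
    by (rule dim_le_card) (auto intro: span_base)
  also have "\<dots> \<le> 2" by (simp add: card_insert_le_m1)
  finally have "dim {gm c u, gm c y} < DIM(real^4)" by simp
  then obtain n where "n \<noteq> 0" "\<And>z. z \<in> span {gm c u, gm c y} \<Longrightarrow> orthogonal n z"
    using orthogonal_to_subspace_exists by blast
  then have "orthogonal n (gm c u)" "orthogonal n (gm c y)" by (auto intro: span_base)
  then show ?thesis using that \<open>n \<noteq> 0\<close> by (simp add: orthogonal_def inner_gm)
qed

lemma cs3: "(a0*b0 + a1*b1 + a2*b2)^2 \<le> (a0^2+a1^2+a2^2)*(b0^2+b1^2+b2^2)" for a0 a1 a2 b0 b1 b2 :: real
proof -
  have "(a0^2+a1^2+a2^2)*(b0^2+b1^2+b2^2) - (a0*b0 + a1*b1 + a2*b2)^2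
        = (a0*b1-a1*b0)^2 + (a0*b2-a2*b0)^2 + (a1*b2-a2*b1)^2"
    by algebra
  moreover have "(a0*b1-a1*b0)^2 + (a0*b2-a2*b0)^2 + (a1*b2-a2*b1)^2 \<ge> 0" by simp
  ultimately show ?thesis by linarith
qed

lemma core:
  fixes c :: real and w u :: "real^4"
  assumes c: "c > 0" and w: "lor c w w \<le> 0" "w \<noteq> 0" and u: "lor c u u < 0"
  shows "\<bar>w$0*u$0 + w$1*u$1 + w$2*u$2\<bar> < c^2 * \<bar>w$3 * u$3\<bar>"
proof -
  define s where "s = w$0*u$0 + w$1*u$1 + w$2*u$2"
  define A where "A = (w$0)^2 + (w$1)^2 + (w$2)^2"
  define B where "B = (u$0)^2 + (u$1)^2 + (u$2)^2"
  have A: "A \<le> c^2 * (w$3)^2" using w(1) unfolding lor_def A_def power2_eq_square by linarith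
  have B: "B < c^2 * (u$3)^2" using u unfolding lor_def B_def power2_eq_square by linarith
  have A0: "A \<ge> 0" "B \<ge> 0" by (simp_all add: A_def B_def)
  have w3: "w$3 \<noteq> 0"
  proof
    assume h: "w$3 = 0"
    then have "A \<le> 0" using A by simp
    then have "(w$0)^2 = 0" "(w$1)^2 = 0" "(w$2)^2 = 0" unfolding A_def
      using zero_le_power2[of "w$0"] zero_le_power2[of "w$1"] zero_le_power2[of "w$2"] by linarith+
    with h w(2) show False by (simp add: vec4_eq)
  qed
  have cs: "s^2 \<le> A * B" unfolding s_def A_def B_def by (rule cs3)
  have "A * B \<le> (c^2 * (w$3)^2) * B" using A A0 by (simp add: mult_right_mono)
  also have "\<dots> < (c^2 * (w$3)^2) * (c^2 * (u$3)^2)"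
    using B w3 c by (simp add: mult_strict_left_mono)
  finally have "s^2 < (c^2 * (w$3)^2) * (c^2 * (u$3)^2)"
    using cs by linarith
  also have "(c^2 * (w$3)^2) * (c^2 * (u$3)^2) = (c^2 * \<bar>w$3 * u$3\<bar>)^2"
    by (simp add: power_mult_distrib power2_abs)
  finally have "s^2 < (c^2 * \<bar>w$3 * u$3\<bar>)^2" .
  then have "\<bar>s\<bar> < c^2 * \<bar>w$3 * u$3\<bar>"
    by (metis abs_ge_zero abs_power2 power2_abs power_less_imp_less_base zero_le_mult_iff zero_le_power2)
  then show ?thesis unfolding s_def .
qed
lemma core_nz:
  assumes "c > 0" "lor c w w \<le> 0" "w \<noteq> 0" "lor c u u < 0"
  shows "w$3 * u$3 \<noteq> 0"
  using core[OF assms] by auto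

lemma lor_sign:
  assumes "c > 0" "lor c w w \<le> 0" "w \<noteq> 0" "lor c u u < 0"
  shows "(lor c w u < 0 \<longleftrightarrow> w$3 * u$3 > 0)" "lor c w u \<noteq> 0"
proof -
  have k: "\<bar>w$0*u$0 + w$1*u$1 + w$2*u$2\<bar> < c^2 * \<bar>w$3 * u$3\<bar>" by (rule core[OF assms])
  have nz: "w$3 * u$3 \<noteq> 0" by (rule core_nz[OF assms])
  have c2: "c^2 > 0" using assms(1) by simp
  have e: "lor c w u = (w$0*u$0 + w$1*u$1 + w$2*u$2) - c^2 * (w$3 * u$3)" by (simp add: lor_def)
  show "(lor c w u < 0 \<longleftrightarrow> w$3 * u$3 > 0)"
  proof (cases "w$3 * u$3 > 0")
    case True
    then show ?thesis using k e by (simp add: abs_if split: if_splits) linarith?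
  next
    case False
    then have "w$3 * u$3 < 0" using nz by linarith
    then show ?thesis using k e by (simp add: abs_if split: if_splits) linarith?
  qed
  show "lor c w u \<noteq> 0"
  proof (cases "w$3 * u$3 > 0")
    case True
    then show ?thesis using k e by (simp add: abs_if split: if_splits) linarith?
  next
    case False
    then have "w$3 * u$3 < 0" using nz by linarith
    then show ?thesis using k e by (simp add: abs_if split: if_splits) linarith?
  qed
qed

lemma orth_spacelike:
  assumes "c > 0" "timelike c u" "lor c a u = 0" "a \<noteq> 0"
  shows "lor c a a > 0"
proof (rule ccontr)
  assume "\<not> lor c a a > 0"
  then have "lor c a a \<le> 0" by simp
  from lor_sign(2)[OF assms(1) this assms(4)] assms(2,3) show False by (simp add: timelike_def)
qed

lemma orthochronous:
  fixes L :: "real^4^4"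
  assumes c: "c > 0" and u: "timelike c u" and pres: "\<And>x y. lor c (L *v x) (L *v y) = lor c x y"
    and fx: "L *v u = u"
  shows "L$3$3 > 0"
proof -
  define e :: "real^4" where "e = (\<chi> i. if i = 3 then 1 else 0)"
  define w where "w = L *v e"
  have w3: "w$3 = L$3$3" unfolding w_def e_def by (simp add: matrix_vector_mult_def sum4)
  have ee: "lor c e e = -(c^2)" unfolding e_def by (simp add: lor_def)
  have ee0: "lor c e e < 0" using ee c by simp
  have uu: "lor c u u < 0" using u by (simp add: timelike_def)
  have ww: "lor c w w = -(c^2)" unfolding w_def pres ee ..
  have ww0: "lor c w w \<le> 0" using ww by simp
  have wnz: "w \<noteq> 0" using ww c by (auto simp: lor_def)
  have enz: "e \<noteq> 0" using ee c by (auto simp: lor_def)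
  have wu: "lor c w u = lor c e u" unfolding w_def using pres[of e u] fx by simp
  have e3: "e$3 = 1" by (simp add: e_def)
  have s1: "lor c e u < 0 \<longleftrightarrow> u$3 > 0" using lor_sign(1)[OF c _ enz uu] ee0 e3 by simp
  have s2: "lor c w u < 0 \<longleftrightarrow> w$3 * u$3 > 0" using lor_sign(1)[OF c ww0 wnz uu] .
  have n1: "w$3 * u$3 \<noteq> 0" using core_nz[OF c ww0 wnz uu] .
  have n2: "e$3 * u$3 \<noteq> 0" using core_nz[OF c _ enz uu] ee0 by simp
  show ?thesis
  proof (cases "u$3 > 0")
    case True
    then have "w$3 * u$3 > 0" using s1 s2 wu by simp
    then show ?thesis using True w3 by (simp add: zero_less_mult_iff)
  next
    case False
    then have "u$3 < 0" using n2 e3 by (auto simp: less_le)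
    then have "\<not> w$3 * u$3 > 0" using s1 s2 wu by simp
    then have "w$3 * u$3 < 0" using n1 by linarith
    then show ?thesis using \<open>u$3 < 0\<close> w3 by (simp add: mult_less_0_iff)
  qed
qed
lemma det_rank1:
  fixes x y :: "real^4"
  shows "det (\<chi> i j. (if i = j then 1 else 0) + x$i * y$j) = 1 + (x$0*y$0 + x$1*y$1 + x$2*y$2 + x$3*y$3)"
proof -
  have f1: "finite {1::4, 2, 3}" "0 \<notin> {1::4, 2, 3}" by auto
  have f2: "finite {2::4, 3}" "1 \<notin> {2::4, 3}" by auto
  have f3: "finite {3::4}" "2 \<notin> {3::4}" by auto
  show ?thesis
    unfolding det_def UNIV4'
    unfolding sum_over_permutations_insert[OF f1]
    unfolding sum_over_permutations_insert[OF f2]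
    unfolding sum_over_permutations_insert[OF f3]
    unfolding permutes_sing
    by (simp add: sign_swap_id permutation_swap_id sign_compose sign_id swap_id_eq permutation_compose algebra_simps)
qed

definition rvec :: "real \<Rightarrow> real^4 \<Rightarrow> real^4" where
  "rvec c a = (\<chi> j. (-2 / lor c a a) * ((if j = 3 then -(c^2) else 1) * a$j))"

definition lrefl :: "real \<Rightarrow> real^4 \<Rightarrow> real^4^4" where
  "lrefl c a = (\<chi> i j. (if i = j then 1 else 0) + a$i * (rvec c a)$j)"

lemma refl_apply0: "lrefl c a *v x = x + ((-2 / lor c a a) * lor c a x) *\<^sub>R a"
proof -
  define k where "k = -2 / lor c a a"
  have r: "rvec c a = (\<chi> j. k * ((if j = 3 then -(c^2) else 1) * a$j))" by (simp add: rvec_def k_def)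
  show ?thesis unfolding k_def[symmetric] unfolding vec4_eq
    by (simp add: lrefl_def r matrix_vector_mult_def sum4 lor_def algebra_simps)
qed

lemma refl_apply: "lrefl c a *v x = x - (2 * lor c x a / lor c a a) *\<^sub>R a"
  unfolding refl_apply0 by (simp add: lor_sym[of c a x] scaleR_minus_left[symmetric] del: scaleR_minus_left)

lemma refl_det: assumes "lor c a a \<noteq> 0" shows "det (lrefl c a) = -1"
proof -
  define k where "k = -2 / lor c a a"
  have r: "rvec c a = (\<chi> j. k * ((if j = 3 then -(c^2) else 1) * a$j))" by (simp add: rvec_def k_def)
  have "a$0 * rvec c a $0 + a$1 * rvec c a $1 + a$2 * rvec c a $2 + a$3 * rvec c a $3 = k * lor c a a"
    unfolding r by (simp add: lor_def algebra_simps)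
  also have "\<dots> = -2" using assms by (simp add: k_def)
  finally show ?thesis unfolding lrefl_def det_rank1 by simp
qed

lemma refl_lor: "lor c (lrefl c a *v x) (lrefl c a *v y) = lor c x y"
proof (cases "lor c a a = 0")
  case True then show ?thesis by (simp add: refl_apply)
next
  case False
  show ?thesis unfolding refl_apply lor_simps using False
    by (simp add: lor_sym[of c a x] lor_sym[of c a y] field_simps)
qed

lemma refl_fix: "lor c x a = 0 \<Longrightarrow> lrefl c a *v x = x"
  by (simp add: refl_apply)

lemma refl_swap:
  assumes "lor c v v = lor c w w" "lor c (v - w) (v - w) \<noteq> 0"
  shows "lrefl c (v - w) *v v = w"
proof -
  have l: "lor c (v - w) (v - w) = 2 * lor c v (v - w)"
    using assms(1) by (simp add: lor_simps lor_sym[of c w v])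
  have "2 * lor c v (v - w) / lor c (v - w) (v - w) = 1" using l assms(2) by simp
  then show ?thesis by (simp add: refl_apply lor_sym[of c "v - w" v])
qed

lemma stab_two_refl:
  assumes c: "c > 0" and u: "timelike c u" and a: "lor c a u = 0" "a \<noteq> 0"
    and b: "lor c b u = 0" "b \<noteq> 0"
  shows "lrefl c b ** lrefl c a \<in> stab c u"
proof -
  let ?L = "lrefl c b ** lrefl c a"
  have pres: "\<And>x y. lor c (?L *v x) (?L *v y) = lor c x y"
    by (simp add: matrix_vector_mul_assoc[symmetric] refl_lor)
  have fx: "?L *v u = u"
    using a b by (simp add: matrix_vector_mul_assoc[symmetric] refl_fix lor_sym[of c u])
  have aa: "lor c a a \<noteq> 0" "lor c b b \<noteq> 0" using orth_spacelike[OF c u] a b by force+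
  have "det ?L = 1" using aa by (simp add: det_mul refl_det)
  moreover have "?L$3$3 > 0" by (rule orthochronous[OF c u pres fx])
  ultimately show ?thesis using pres fx by (simp add: stab_def lorentz_po_def)
qed

lemma id_stab: "mat 1 \<in> stab c u"
proof -
  have "(mat 1 :: real^4^4)$3$3 = 1" by (simp add: mat_def)
  then show ?thesis by (simp add: stab_def lorentz_po_def)
qed

lemma transitive:
  assumes c: "c > 0" and u: "timelike c u" and v: "lor c v u = 0" and w: "lor c w u = 0"
    and n: "lor c v v = lor c w w"
  shows "\<exists>L\<in>stab c u. L *v v = w"
proof (cases "v = w")
  case True then show ?thesis using id_stab by force
next
  case False
  have a: "lor c (v - w) u = 0" "v - w \<noteq> 0" using v w False by (simp_all add: lor_simps)
  obtain b where b: "b \<noteq> 0" "lor c b u = 0" "lor c b w = 0" using perp_exists by blast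
  have L: "lrefl c b ** lrefl c (v - w) \<in> stab c u" by (rule stab_two_refl[OF c u a b(2) b(1)])
  have aa: "lor c (v - w) (v - w) \<noteq> 0" using orth_spacelike[OF c u a] by simp
  have "(lrefl c b ** lrefl c (v - w)) *v v = w"
    by (simp add: matrix_vector_mul_assoc[symmetric] refl_swap[OF n aa] refl_fix lor_sym[of c w b] b)
  then show ?thesis using L by blast
qed



lemma transl_in: "(\<lambda>x. x + b) \<in> poinc_X c u"
proof -
  have "(\<lambda>x. x + b) = (\<lambda>x. mat 1 *v x + b)" by simp
  then show ?thesis unfolding poinc_X_def using id_stab by blast
qed

lemma lin_in: "L \<in> stab c u \<Longrightarrow> (\<lambda>x. L *v x) \<in> poinc_X c u"
proof -
  assume L: "L \<in> stab c u"
  have "(\<lambda>x. L *v x) = (\<lambda>x. L *v x + 0)" by simp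
  then show ?thesis unfolding poinc_X_def using L by blast
qed

lemma stab_conf: "L \<in> stab c u \<Longrightarrow> L \<in> conf_stab c u"
proof -
  assume L: "L \<in> stab c u"
  then have Lu: "L *v u = u" and Lp: "L \<in> lorentz_po c" by (auto simp: stab_def)
  have "(\<lambda>x. L *v x) ` line u = line u"
  proof (rule set_eqI, rule iffI)
    fix z assume "z \<in> (\<lambda>x. L *v x) ` line u"
    then obtain t where "z = L *v (t *\<^sub>R u)" by (auto simp: line_def)
    then show "z \<in> line u" by (auto simp: line_def matrix_vector_mult_scaleR Lu)
  next
    fix z assume zl: "z \<in> line u"
    then obtain t where z: "z = t *\<^sub>R u" by (auto simp: line_def)
    then have "z = L *v z" by (simp add: matrix_vector_mult_scaleR Lu)
    with zl show "z \<in> (\<lambda>x. L *v x) ` line u" by blast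
  qed
  then show ?thesis unfolding conf_stab_def mem_Collect_eq
    by (intro conjI exI[of _ "1::real"] exI[of _ L]) (use Lp in auto)
qed

lemma poinc_conf: "poinc_X c u \<subseteq> conf_poinc_X c u"
  unfolding poinc_X_def conf_poinc_X_def using stab_conf by blast

lemma scale_conf:
  assumes "\<mu> > 0"
  shows "(\<lambda>x. \<mu> *\<^sub>R x) \<in> conf_poinc_X c u"
proof -
  have m: "(\<mu> *\<^sub>R mat 1) *v x = \<mu> *\<^sub>R x" for x :: "real^4"
    by (simp add: scaleR_matrix_vector_assoc[symmetric])
  have "(\<lambda>x. (\<mu> *\<^sub>R mat 1) *v x) ` line u = line u"
  proof -
    have "(\<lambda>x. \<mu> *\<^sub>R x) ` line u = line u"
    proof (rule set_eqI, rule iffI)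
      fix z assume "z \<in> (\<lambda>x. \<mu> *\<^sub>R x) ` line u"
      then obtain x where x: "x \<in> line u" "z = \<mu> *\<^sub>R x" by blast
      then obtain t where "x = t *\<^sub>R u" by (auto simp: line_def)
      then have "z = (\<mu> * t) *\<^sub>R u" using x by simp
      then show "z \<in> line u" by (auto simp: line_def)
    next
      fix z assume zl: "z \<in> line u"
      then obtain t where z: "z = t *\<^sub>R u" by (auto simp: line_def)
      have "(t / \<mu>) *\<^sub>R u \<in> line u" by (auto simp: line_def)
      moreover have "z = \<mu> *\<^sub>R ((t / \<mu>) *\<^sub>R u)" using z assms by simp
      ultimately show "z \<in> (\<lambda>x. \<mu> *\<^sub>R x) ` line u" by blast
    qed
    moreover have "(\<lambda>x::real^4. (\<mu> *\<^sub>R mat 1) *v x) = (\<lambda>x. \<mu> *\<^sub>R x)" by (rule ext) (simp add: m)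
    ultimately show ?thesis by simp
  qed
  moreover have "mat 1 \<in> lorentz_po c" using id_stab by (simp add: stab_def)
  ultimately have "\<mu> *\<^sub>R mat 1 \<in> conf_stab c u" unfolding conf_stab_def using assms by blast
  moreover have "(\<lambda>x::real^4. \<mu> *\<^sub>R x) = (\<lambda>x. (\<mu> *\<^sub>R mat 1) *v x + 0)" by (rule ext) (simp add: m)
  ultimately show ?thesis unfolding conf_poinc_X_def by blast
qed

lemma K_basic:
  fixes R :: "(real^4) rel"
  assumes eq: "equiv UNIV R" and tr: "\<And>b x y. (x, y) \<in> R \<Longrightarrow> (x + b, y + b) \<in> R"
  shows "(x, y) \<in> R \<longleftrightarrow> y - x \<in> R `` {0}"
    and "0 \<in> R `` {0}"
    and "a \<in> R `` {0} \<Longrightarrow> b \<in> R `` {0} \<Longrightarrow> a + b \<in> R `` {0}"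
    and "a \<in> R `` {0} \<Longrightarrow> - a \<in> R `` {0}"
proof -
  have E: "refl_on UNIV R" "sym R" "trans R" using eq by (auto elim: equivE)
  have refl: "(z, z) \<in> R" for z using E(1) by (rule refl_onD) simp
  have sym: "(p, q) \<in> R \<Longrightarrow> (q, p) \<in> R" for p q using E(2) by (rule symD)
  have trn: "(p, q) \<in> R \<Longrightarrow> (q, r) \<in> R \<Longrightarrow> (p, r) \<in> R" for p q r using E(3) by (rule transD)
  show "(x, y) \<in> R \<longleftrightarrow> y - x \<in> R `` {0}"
  proof
    assume "(x, y) \<in> R"
    from tr[OF this, of "- x"] show "y - x \<in> R `` {0}"
      by simp
  next
    assume "y - x \<in> R `` {0}"
    then have "(0, y - x) \<in> R" by simp
    from tr[OF this, of x] show "(x, y) \<in> R" by simp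
  qed
  show "0 \<in> R `` {0}" using refl by simp
  show "a \<in> R `` {0} \<Longrightarrow> b \<in> R `` {0} \<Longrightarrow> a + b \<in> R `` {0}"
  proof -
    assume a: "a \<in> R `` {0}" and b: "b \<in> R `` {0}"
    have "(a, a + b) \<in> R" using tr[of 0 b a] b by (simp add: add.commute)
    with a show ?thesis using trn by simp
  qed
  show "a \<in> R `` {0} \<Longrightarrow> - a \<in> R `` {0}"
  proof -
    assume a: "a \<in> R `` {0}"
    have "(- a, 0) \<in> R" using tr[of 0 a "- a"] a by simp
    then show ?thesis using sym by simp
  qed
qed

lemma fill_orth:
  fixes K :: "(real^4) set"
  assumes c: "c > 0" and u: "timelike c u"
    and K0: "0 \<in> K" and Kadd: "\<And>a b. a \<in> K \<Longrightarrow> b \<in> K \<Longrightarrow> a + b \<in> K"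
    and Kneg: "\<And>a. a \<in> K \<Longrightarrow> - a \<in> K"
    and KL: "\<And>L a. L \<in> stab c u \<Longrightarrow> a \<in> K \<Longrightarrow> L *v a \<in> K"
    and z: "z \<in> K" and pz: "z - (lor c z u / lor c u u) *\<^sub>R u \<noteq> 0"
    and y: "lor c y u = 0"
  shows "y \<in> K"
proof -
  have uu: "lor c u u < 0" using u by (simp add: timelike_def)
  have Kdiff: "a \<in> K \<Longrightarrow> b \<in> K \<Longrightarrow> a - b \<in> K" for a b
    using Kadd[of a "- b"] Kneg[of b] by simp
  have Knat: "a \<in> K \<Longrightarrow> real n *\<^sub>R a \<in> K" for a n
  proof (induction n)
    case 0 then show ?case using K0 by simp
  next
    case (Suc n) then show ?case using Kadd[of "real n *\<^sub>R a" a] by (simp add: algebra_simps)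
  qed
  define t where "t = lor c z u / lor c u u"
  define v where "v = z - t *\<^sub>R u"
  have v0: "v \<noteq> 0" using pz by (simp add: v_def t_def)
  have vu: "lor c v u = 0" using uu by (simp add: v_def t_def lor_simps)
  have Qv: "lor c v v > 0" using orth_spacelike[OF c u vu v0] .
  have Qnn: "lor c a a \<ge> 0" if "lor c a u = 0" for a
    using orth_spacelike[OF c u that] by (cases "a = 0") (auto simp: lor_simps)
  have step1: "w - v \<in> K" if w: "lor c w u = 0" "lor c w w = lor c v v" for w
  proof -
    obtain L where L: "L \<in> stab c u" "L *v v = w" using transitive[OF c u vu w(1)] w(2) by metis
    have Lu: "L *v u = u" using L(1) by (simp add: stab_def)
    have zv: "z = v + t *\<^sub>R u" by (simp add: v_def)
    have "L *v z = w + t *\<^sub>R u" unfolding zv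
      by (simp add: matrix_vector_right_distrib matrix_vector_mult_scaleR Lu L(2))
    then have "L *v z - z = w - v" using zv by simp
    moreover have "L *v z - z \<in> K" using Kdiff[OF KL[OF L(1) z] z] .
    ultimately show ?thesis by simp
  qed
  have step2: "a \<in> K" if a: "lor c a u = 0" "lor c a a \<le> 4 * lor c v v" for a
  proof -
    obtain n where n: "n \<noteq> 0" "lor c n u = 0" "lor c n a = 0" using perp_exists by blast
    have Qn: "lor c n n > 0" using orth_spacelike[OF c u n(2) n(1)] .
    define s where "s = sqrt ((lor c v v - lor c a a / 4) / lor c n n)"
    have s2: "s^2 * lor c n n = lor c v v - lor c a a / 4"
      using Qn a(2) by (simp add: s_def)
    define w1 where "w1 = (1/2) *\<^sub>R a + s *\<^sub>R n"
    define w2 where "w2 = (-1/2) *\<^sub>R a + s *\<^sub>R n"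
    have an: "lor c a n = 0" using n(3) by (simp add: lor_sym)
    have q1: "lor c w1 w1 = lor c v v" unfolding w1_def
      using s2 by (simp add: lor_simps an n(3) power2_eq_square algebra_simps)
    have q2: "lor c w2 w2 = lor c v v" unfolding w2_def
      using s2 by (simp add: lor_simps an n(3) power2_eq_square algebra_simps)
    have u1: "lor c w1 u = 0" "lor c w2 u = 0" unfolding w1_def w2_def
      by (simp_all add: lor_simps a(1) n(2))
    have "(w1 - v) - (w2 - v) \<in> K" using Kdiff step1[OF u1(1) q1] step1[OF u1(2) q2] by blast
    moreover have "(w1 - v) - (w2 - v) = ((1/2) - (-1/2)) *\<^sub>R a"
      unfolding w1_def w2_def scaleR_diff_left by simp
    moreover have "((1/2) - (-1/2::real)) *\<^sub>R a = a" by simp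
    ultimately show ?thesis by simp
  qed
  obtain N :: nat where N: "real N > lor c y y / lor c v v + 1" using reals_Archimedean2 by blast
  have N1: "real N \<ge> 1" using N Qnn[OF y] Qv by (smt (verit) divide_nonneg_pos)
  define y' where "y' = (1 / real N) *\<^sub>R y"
  have y'u: "lor c y' u = 0" by (simp add: y'_def lor_simps y)
  have "lor c y' y' = lor c y y / (real N)^2" by (simp add: y'_def lor_simps power2_eq_square)
  also have "\<dots> \<le> lor c y y / real N"
    using N1 Qnn[OF y] by (simp add: frac_le power2_eq_square)
  also have "\<dots> \<le> 4 * lor c v v"
  proof -
    have "lor c y y < real N * lor c v v" using N Qv by (simp add: field_simps)
    moreover have "real N * lor c v v \<le> real N * (lor c v v * 4)"
      using N1 Qv by (intro mult_left_mono) auto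
    ultimately have "lor c y y \<le> real N * (lor c v v * 4)" by linarith
    then show ?thesis using N1 by (simp add: field_simps)
  qed
  finally have "y' \<in> K" using step2[OF y'u] by simp
  then have "real N *\<^sub>R y' \<in> K" by (rule Knat)
  moreover have "real N *\<^sub>R y' = y" using N1 by (simp add: y'_def)
  ultimately show ?thesis by simp
qed




lemma classify:
  fixes R :: "(real^4) rel"
  assumes c: "c > 0" and u: "timelike c u" and eq: "equiv UNIV R"
    and inv: "invariant_under (poinc_X c u) R"
  shows "\<And>x y. (x, y) \<in> R \<longleftrightarrow> y - x \<in> R `` {0}"
    and "0 \<in> R `` {0}"
    and "\<And>a b. a \<in> R `` {0} \<Longrightarrow> b \<in> R `` {0} \<Longrightarrow> a + b \<in> R `` {0}"
    and "\<And>a. a \<in> R `` {0} \<Longrightarrow> - a \<in> R `` {0}"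
    and "\<And>L a. L \<in> stab c u \<Longrightarrow> a \<in> R `` {0} \<Longrightarrow> L *v a \<in> R `` {0}"
    and "(\<forall>z\<in>R `` {0}. z - (lor c z u / lor c u u) *\<^sub>R u = 0) \<or> (\<forall>y. lor c y u = 0 \<longrightarrow> y \<in> R `` {0})"
proof -
  have tr: "(x + b, y + b) \<in> R" if "(x, y) \<in> R" for b x y
    using bspec[OF inv[unfolded invariant_under_def] transl_in[of b c u]] that by simp
  note KB = K_basic[OF eq tr]
  show "\<And>x y. (x, y) \<in> R \<longleftrightarrow> y - x \<in> R `` {0}" by (rule KB(1))
  show K0: "0 \<in> R `` {0}" by (rule KB(2))
  show Kadd: "\<And>a b. a \<in> R `` {0} \<Longrightarrow> b \<in> R `` {0} \<Longrightarrow> a + b \<in> R `` {0}" by (rule KB(3))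
  show Kneg: "\<And>a. a \<in> R `` {0} \<Longrightarrow> - a \<in> R `` {0}" by (rule KB(4))
  show KL: "\<And>L a. L \<in> stab c u \<Longrightarrow> a \<in> R `` {0} \<Longrightarrow> L *v a \<in> R `` {0}"
  proof -
    fix L a assume L: "L \<in> stab c u" and a: "a \<in> R `` {0}"
    have "(0, a) \<in> R" using a by simp
    then have "(L *v 0, L *v a) \<in> R" using bspec[OF inv[unfolded invariant_under_def] lin_in[OF L]] by blast
    then show "L *v a \<in> R `` {0}" by simp
  qed
  show "(\<forall>z\<in>R `` {0}. z - (lor c z u / lor c u u) *\<^sub>R u = 0) \<or> (\<forall>y. lor c y u = 0 \<longrightarrow> y \<in> R `` {0})"
  proof (cases "\<forall>z\<in>R `` {0}. z - (lor c z u / lor c u u) *\<^sub>R u = 0")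
    case True then show ?thesis by blast
  next
    case False
    then obtain z where z: "z \<in> R `` {0}" "z - (lor c z u / lor c u u) *\<^sub>R u \<noteq> 0" by blast
    have "\<forall>y. lor c y u = 0 \<longrightarrow> y \<in> R `` {0}"
      using fill_orth[OF c u K0 Kadd Kneg KL z(1) z(2)] by blast
    then show ?thesis by blast
  qed
qed

lemma decomp:
  assumes u: "timelike c u"
  shows "lor c (z - (lor c z u / lor c u u) *\<^sub>R u) u = 0"
  using u by (simp add: timelike_def lor_simps)




lemma partA:
  fixes R :: "(real^4) rel"
  assumes c: "c > 0" and u: "timelike c u" and eq: "equiv UNIV R"
  shows "invariant_under (poinc_X c u) R \<longleftrightarrow>
            (\<exists>H. add_subgroup H \<and>
               ((\<forall>x. R `` {x} = {x + h *\<^sub>R u | h. h \<in> H}) \<or>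
                (\<forall>x. R `` {x} = {x + v + h *\<^sub>R u | v h. v \<in> orth c u \<and> h \<in> H})))"
proof
  assume inv: "invariant_under (poinc_X c u) R"
  note C = classify[OF c u eq inv]
  define K where "K = R `` {0}"
  have uu: "lor c u u \<noteq> 0" using u by (simp add: timelike_def)
  define H where "H = {h. h *\<^sub>R u \<in> K}"
  have Kdiff: "a \<in> K \<Longrightarrow> b \<in> K \<Longrightarrow> a - b \<in> K" for a b
    using C(3)[of a "- b"] C(4)[of b] by (simp add: K_def)
  have HS: "add_subgroup H"
    unfolding add_subgroup_def H_def using C(2,3,4)
    by (auto simp: K_def scaleR_add_left)
  have mem: "(x, y) \<in> R \<longleftrightarrow> y - x \<in> K" for x y unfolding K_def using C(1)[of x y] by blast
  show "\<exists>H. add_subgroup H \<and>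
               ((\<forall>x. R `` {x} = {x + h *\<^sub>R u | h. h \<in> H}) \<or>
                (\<forall>x. R `` {x} = {x + v + h *\<^sub>R u | v h. v \<in> orth c u \<and> h \<in> H}))"
  proof (cases "\<forall>z\<in>K. z - (lor c z u / lor c u u) *\<^sub>R u = 0")
    case True
    have "R `` {x} = {x + h *\<^sub>R u | h. h \<in> H}" for x
    proof (rule set_eqI, rule iffI)
      fix y assume "y \<in> R `` {x}"
      then have k: "y - x \<in> K" by (simp add: mem)
      then have e: "y - x = (lor c (y - x) u / lor c u u) *\<^sub>R u" using True by auto
      then have "lor c (y - x) u / lor c u u \<in> H" using k by (simp add: H_def)
      moreover have "y = x + (lor c (y - x) u / lor c u u) *\<^sub>R u" using e by (simp add: algebra_simps)
      ultimately show "y \<in> {x + h *\<^sub>R u | h. h \<in> H}" by blast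
    next
      fix y assume "y \<in> {x + h *\<^sub>R u | h. h \<in> H}"
      then obtain h where "h \<in> H" "y = x + h *\<^sub>R u" by blast
      then show "y \<in> R `` {x}" by (simp add: mem H_def)
    qed
    then show ?thesis using HS by blast
  next
    case False
    then have orthK: "\<And>y. lor c y u = 0 \<Longrightarrow> y \<in> K" using C(6) by (auto simp: K_def)
    have "R `` {x} = {x + v + h *\<^sub>R u | v h. v \<in> orth c u \<and> h \<in> H}" for x
    proof (rule set_eqI, rule iffI)
      fix y assume "y \<in> R `` {x}"
      then have k: "y - x \<in> K" by (simp add: mem)
      define t where "t = lor c (y - x) u / lor c u u"
      define p where "p = (y - x) - t *\<^sub>R u"
      have po: "p \<in> orth c u" unfolding p_def t_def orth_def using decomp[OF u] by simp
      have "t *\<^sub>R u = (y - x) - p" by (simp add: p_def)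
      then have "t \<in> H" using Kdiff[OF k orthK[of p]] po by (simp add: H_def orth_def)
      moreover have "y = x + p + t *\<^sub>R u" by (simp add: p_def)
      ultimately show "y \<in> {x + v + h *\<^sub>R u | v h. v \<in> orth c u \<and> h \<in> H}" using po by blast
    next
      fix y assume "y \<in> {x + v + h *\<^sub>R u | v h. v \<in> orth c u \<and> h \<in> H}"
      then obtain v h where vh: "v \<in> orth c u" "h \<in> H" "y = x + v + h *\<^sub>R u" by blast
      have "v + h *\<^sub>R u \<in> K" using C(3)[of v "h *\<^sub>R u"] orthK[of v] vh by (simp add: K_def H_def orth_def)
      then show "y \<in> R `` {x}" using vh by (simp add: mem algebra_simps)
    qed
    then show ?thesis using HS by blast
  qed
next
  assume "\<exists>H. add_subgroup H \<and>
               ((\<forall>x. R `` {x} = {x + h *\<^sub>R u | h. h \<in> H}) \<or>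
                (\<forall>x. R `` {x} = {x + v + h *\<^sub>R u | v h. v \<in> orth c u \<and> h \<in> H}))"
  then obtain H where H: "(\<forall>x. R `` {x} = {x + h *\<^sub>R u | h. h \<in> H}) \<or>
                (\<forall>x. R `` {x} = {x + v + h *\<^sub>R u | v h. v \<in> orth c u \<and> h \<in> H})" by blast
  show "invariant_under (poinc_X c u) R"
    unfolding invariant_under_def
  proof (intro ballI allI impI)
    fix f x y assume f: "f \<in> poinc_X c u" and xy: "(x, y) \<in> R"
    obtain L b where L: "L \<in> stab c u" and fd: "f = (\<lambda>x. L *v x + b)" using f by (auto simp: poinc_X_def)
    have Lu: "L *v u = u" using L by (simp add: stab_def)
    have Lp: "\<And>x y. lor c (L *v x) (L *v y) = lor c x y" using L by (simp add: stab_def lorentz_po_def)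
    have y: "y \<in> R `` {x}" using xy by simp
    from H show "(f x, f y) \<in> R"
    proof
      assume H1: "\<forall>x. R `` {x} = {x + h *\<^sub>R u | h. h \<in> H}"
      then obtain h where h: "h \<in> H" "y = x + h *\<^sub>R u" using y by blast
      have "f y = f x + h *\<^sub>R u"
        by (simp add: fd h(2) matrix_vector_right_distrib matrix_vector_mult_scaleR Lu algebra_simps)
      then have "f y \<in> R `` {f x}" using H1 h(1) by blast
      then show ?thesis by simp
    next
      assume H2: "\<forall>x. R `` {x} = {x + v + h *\<^sub>R u | v h. v \<in> orth c u \<and> h \<in> H}"
      then obtain v h where vh: "v \<in> orth c u" "h \<in> H" "y = x + v + h *\<^sub>R u" using y by blast
      have "f y = f x + L *v v + h *\<^sub>R u"
        by (simp add: fd vh(3) matrix_vector_right_distrib matrix_vector_mult_scaleR Lu algebra_simps)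
      moreover have "L *v v \<in> orth c u" using vh(1) Lp[of v u] Lu by (simp add: orth_def)
      ultimately have "f y \<in> R `` {f x}" using H2 vh(2) by blast
      then show ?thesis by simp
    qed
  qed
qed




lemma std_sync_props:
  assumes c: "c > 0" and u: "timelike c u"
  shows "equiv UNIV (std_sync c u)" "invariant_under (conf_poinc_X c u) (std_sync c u)"
    "\<not> trivial_rel (std_sync c u)"
    "\<not> (\<forall>x. std_sync c u `` {x} = {x + t *\<^sub>R u | t. True})"
proof -
  have uu: "lor c u u < 0" using u by (simp add: timelike_def)
  show "equiv UNIV (std_sync c u)"
  proof (rule equivI)
    show "std_sync c u \<subseteq> UNIV \<times> UNIV" by simp
    show "refl (std_sync c u)" by (rule refl_onI) (auto simp: std_sync_def lor_simps)+
    show "sym (std_sync c u)"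
    proof (rule symI)
      fix a b assume "(a, b) \<in> std_sync c u"
      then have "lor c (a - b) u = 0" by (simp add: std_sync_def)
      then have "lor c (b - a) u = 0" by (simp add: lor_simps)
      then show "(b, a) \<in> std_sync c u" by (simp add: std_sync_def)
    qed
    show "trans (std_sync c u)"
    proof (rule transI)
      fix a b d assume "(a, b) \<in> std_sync c u" "(b, d) \<in> std_sync c u"
      then have "lor c (a - b) u = 0" "lor c (b - d) u = 0" by (simp_all add: std_sync_def)
      then have "lor c (a - d) u = 0" by (simp add: lor_simps)
      then show "(a, d) \<in> std_sync c u" by (simp add: std_sync_def)
    qed
  qed
  show "invariant_under (conf_poinc_X c u) (std_sync c u)"
    unfolding invariant_under_def
  proof (intro ballI allI impI)
    fix f x y assume f: "f \<in> conf_poinc_X c u" and xy: "(x, y) \<in> std_sync c u"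
    obtain M b where M: "M \<in> conf_stab c u" and fd: "f = (\<lambda>x. M *v x + b)"
      using f by (auto simp: conf_poinc_X_def)
    obtain \<mu> L where mL: "\<mu> > 0" "L \<in> lorentz_po c" "M = \<mu> *\<^sub>R L" and img: "(\<lambda>x. M *v x) ` line u = line u"
      using M by (auto simp: conf_stab_def)
    have Lp: "\<And>x y. lor c (L *v x) (L *v y) = lor c x y" using mL(2) by (simp add: lorentz_po_def)
    have ul: "u \<in> line u" unfolding line_def by (auto intro: exI[of _ 1])
    have "M *v u \<in> (\<lambda>x. M *v x) ` line u" using ul by blast
    then have "M *v u \<in> line u" using img by simp
    then obtain k where k: "M *v u = k *\<^sub>R u" by (auto simp: line_def)
    have Mv: "M *v z = \<mu> *\<^sub>R (L *v z)" for z by (simp add: mL(3) scaleR_matrix_vector_assoc)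
    have k0: "k \<noteq> 0"
    proof
      assume "k = 0"
      then have "\<mu> *\<^sub>R (L *v u) = 0" using k Mv by simp
      then have "L *v u = 0" using mL(1) by simp
      then have "lor c u u = 0" using Lp[of u u] by (simp add: lor_simps)
      then show False using uu by simp
    qed
    define w where "w = x - y"
    have w: "lor c w u = 0" using xy by (simp add: std_sync_def w_def)
    have "lor c (M *v w) (M *v u) = \<mu> * \<mu> * lor c w u" by (simp add: Mv lor_simps Lp)
    then have "k * lor c (M *v w) u = 0" using w k by (simp add: lor_simps)
    then have "lor c (M *v w) u = 0" using k0 by simp
    moreover have "f x - f y = M *v w" by (simp add: fd w_def matrix_vector_mult_diff_distrib)
    ultimately show "(f x, f y) \<in> std_sync c u" by (simp add: std_sync_def)
  qed
  have u0: "u \<noteq> 0" using uu by (auto simp: lor_def)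
  have u3: "u$3 \<noteq> 0" using core_nz[OF c _ u0 uu] uu by auto
  define v0 :: "real^4" where "v0 = (\<chi> i. if i = 0 then u$3 else if i = 3 then u$0 / c^2 else 0)"
  have v0u: "lor c v0 u = 0" using c by (simp add: v0_def lor_def)
  have v00: "v0 \<noteq> 0"
  proof
    assume "v0 = 0"
    then have "v0 $ 0 = 0" by simp
    then show False using u3 by (simp add: v0_def)
  qed
  have in1: "(0, v0) \<in> std_sync c u" using v0u by (simp add: std_sync_def lor_simps)
  have notin: "(0, u) \<notin> std_sync c u" using uu by (simp add: std_sync_def lor_simps)
  show "\<not> trivial_rel (std_sync c u)"
    unfolding trivial_rel_def using in1 notin v00 by auto
  show "\<not> (\<forall>x. std_sync c u `` {x} = {x + t *\<^sub>R u | t. True})"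
  proof
    assume "\<forall>x. std_sync c u `` {x} = {x + t *\<^sub>R u | t. True}"
    then have "v0 \<in> {0 + t *\<^sub>R u | t. True}" using in1 by blast
    then obtain t where t: "v0 = t *\<^sub>R u" by auto
    then have "t * lor c u u = 0" using v0u by (simp add: lor_simps)
    then have "t = 0" using uu by simp
    then show False using t v00 by simp
  qed
qed




lemma partB_fwd:
  fixes R :: "(real^4) rel"
  assumes c: "c > 0" and u: "timelike c u" and eq: "equiv UNIV R"
    and inv: "invariant_under (conf_poinc_X c u) R" and nt: "\<not> trivial_rel R"
    and nw: "\<not> (\<forall>x. R `` {x} = {x + t *\<^sub>R u | t. True})"
  shows "R = std_sync c u"
proof -
  have invp: "invariant_under (poinc_X c u) R"
    using inv poinc_conf unfolding invariant_under_def by blast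
  note C = classify[OF c u eq invp]
  define K where "K = R `` {0}"
  have uu: "lor c u u < 0" using u by (simp add: timelike_def)
  have mem: "(x, y) \<in> R \<longleftrightarrow> y - x \<in> K" for x y unfolding K_def using C(1)[of x y] by blast
  have Kdiff: "a \<in> K \<Longrightarrow> b \<in> K \<Longrightarrow> a - b \<in> K" for a b
    using C(3)[of a "- b"] C(4)[of b] by (simp add: K_def)
  have Kneg: "a \<in> K \<Longrightarrow> - a \<in> K" for a using C(4) by (simp add: K_def)
  have Ksc: "a \<in> K \<Longrightarrow> \<mu> > 0 \<Longrightarrow> \<mu> *\<^sub>R a \<in> K" for a \<mu>
  proof -
    assume a: "a \<in> K" and m: "\<mu> > 0"
    have "(0, a) \<in> R" using a by (simp add: K_def)
    then have "((\<lambda>x. \<mu> *\<^sub>R x) 0, (\<lambda>x. \<mu> *\<^sub>R x) a) \<in> R"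
      using bspec[OF inv[unfolded invariant_under_def] scale_conf[OF m]] by blast
    then show ?thesis by (simp add: K_def)
  qed
  define H where "H = {h. h *\<^sub>R u \<in> K}"
  have allt: "\<forall>t. t *\<^sub>R u \<in> K" if h: "h \<in> H" "h \<noteq> 0" for h
  proof
    fix t :: real
    have hu: "h *\<^sub>R u \<in> K" using h by (simp add: H_def)
    consider "t = 0" | "t / h > 0" | "t / h < 0" by (meson linorder_neqE_linordered_idom divide_eq_0_iff h(2))
    then show "t *\<^sub>R u \<in> K"
    proof cases
      case 1 then show ?thesis using C(2) by (simp add: K_def)
    next
      case 2
      have "(t / h) *\<^sub>R (h *\<^sub>R u) \<in> K" by (rule Ksc[OF hu 2])
      then show ?thesis using h(2) by simp
    next
      case 3
      have "(- (t / h)) *\<^sub>R (h *\<^sub>R u) \<in> K" by (rule Ksc[OF hu]) (use 3 in simp)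
      then have "- ((- (t / h)) *\<^sub>R (h *\<^sub>R u)) \<in> K" by (rule Kneg)
      then show ?thesis using h(2) by simp
    qed
  qed
  define pr where "pr z = z - (lor c z u / lor c u u) *\<^sub>R u" for z
  have zdec: "z = pr z + (lor c z u / lor c u u) *\<^sub>R u" for z by (simp add: pr_def)
  show ?thesis
  proof (cases "\<forall>y. lor c y u = 0 \<longrightarrow> y \<in> K")
    case True
    show ?thesis
    proof (cases "\<exists>h\<in>H. h \<noteq> 0")
      case True2: True
      then obtain h where "h \<in> H" "h \<noteq> 0" by blast
      from allt[OF this] have tu: "\<And>t. t *\<^sub>R u \<in> K" by blast
      have "z \<in> K" for z
      proof -
        have "pr z \<in> K" using True decomp[OF u] by (simp add: pr_def)
        then have "pr z - (- (lor c z u / lor c u u) *\<^sub>R u) \<in> K" using Kdiff tu by blast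
        then show ?thesis using zdec[of z] by (simp add: algebra_simps)
      qed
      then have "R = UNIV" using mem by (meson subrelI subset_antisym UNIV_I)
      then show ?thesis using nt by (simp add: trivial_rel_def)
    next
      case False
      have "(x, y) \<in> R \<longleftrightarrow> (x, y) \<in> std_sync c u" for x y
      proof
        assume "(x, y) \<in> R"
        then have k: "y - x \<in> K" by (simp add: mem)
        define z where "z = y - x"
        have "pr z \<in> K" using True decomp[OF u] by (simp add: pr_def)
        then have "z - pr z \<in> K" using Kdiff k by (simp add: z_def)
        then have "lor c z u / lor c u u \<in> H" by (simp add: H_def pr_def)
        then have "lor c z u / lor c u u = 0" using False by blast
        then have "lor c z u = 0" using uu by simp
        then show "(x, y) \<in> std_sync c u" by (simp add: std_sync_def z_def lor_simps)
      next
        assume "(x, y) \<in> std_sync c u"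
        then have "lor c (y - x) u = 0" by (simp add: std_sync_def lor_simps)
        then show "(x, y) \<in> R" using True by (simp add: mem)
      qed
      then show ?thesis by (meson subrelI subset_antisym)
    qed
  next
    case False
    then have A: "\<forall>z\<in>K. pr z = 0" using C(6) by (auto simp: K_def pr_def)
    show ?thesis
    proof (cases "\<exists>h\<in>H. h \<noteq> 0")
      case True
      then obtain h where "h \<in> H" "h \<noteq> 0" by blast
      from allt[OF this] have tu: "\<And>t. t *\<^sub>R u \<in> K" by blast
      have "R `` {x} = {x + t *\<^sub>R u | t. True}" for x
      proof (rule set_eqI, rule iffI)
        fix y assume "y \<in> R `` {x}"
        then have k: "y - x \<in> K" by (simp add: mem)
        then have "y - x = (lor c (y - x) u / lor c u u) *\<^sub>R u" using A zdec[of "y - x"] by simp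
        then have "y = x + (lor c (y - x) u / lor c u u) *\<^sub>R u" by (simp add: algebra_simps)
        then show "y \<in> {x + t *\<^sub>R u | t. True}" by blast
      next
        fix y assume "y \<in> {x + t *\<^sub>R u | t. True}"
        then obtain t where "y = x + t *\<^sub>R u" by blast
        then show "y \<in> R `` {x}" using tu by (simp add: mem)
      qed
      then show ?thesis using nw by blast
    next
      case False2: False
      have "(x, y) \<in> R \<longleftrightarrow> (x, y) \<in> Id" for x y
      proof
        assume "(x, y) \<in> R"
        then have k: "y - x \<in> K" by (simp add: mem)
        then have e: "y - x = (lor c (y - x) u / lor c u u) *\<^sub>R u" using A zdec[of "y - x"] by simp
        then have "lor c (y - x) u / lor c u u \<in> H" using k by (simp add: H_def)
        then have z0: "lor c (y - x) u / lor c u u = 0" using False2 by blast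
        have "y - x = 0 *\<^sub>R u" using e unfolding z0 .
        then have "y - x = 0" by simp
        then show "(x, y) \<in> Id" by simp
      next
        assume "(x, y) \<in> Id"
        moreover have "0 \<in> K" using C(2) by (simp add: K_def)
        ultimately show "(x, y) \<in> R" by (simp add: mem)
      qed
      then have "R = Id" by (meson subrelI subset_antisym)
      then show ?thesis using nt by (simp add: trivial_rel_def)
    qed
  qed
qed

theorem theorem3p17:
  fixes c :: real and u :: "real^4"
  assumes "c > 0" and "timelike c u"
  shows "(\<forall>R. equiv UNIV R \<longrightarrow> (invariant_under (poinc_X c u) R \<longleftrightarrow>
            (\<exists>H. add_subgroup H \<and>
               ((\<forall>x. R `` {x} = {x + h *\<^sub>R u | h. h \<in> H}) \<or>
                (\<forall>x. R `` {x} = {x + v + h *\<^sub>R u | v h. v \<in> orth c u \<and> h \<in> H})))))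
       \<and> (\<forall>R. (equiv UNIV R \<and> invariant_under (conf_poinc_X c u) R \<and> \<not> trivial_rel R
               \<and> \<not> (\<forall>x. R `` {x} = {x + t *\<^sub>R u | t. True}))
              \<longleftrightarrow> R = std_sync c u)"
proof (intro conjI allI impI)
  fix R :: "(real^4) rel" assume "equiv UNIV R"
  then show "invariant_under (poinc_X c u) R \<longleftrightarrow>
            (\<exists>H. add_subgroup H \<and>
               ((\<forall>x. R `` {x} = {x + h *\<^sub>R u | h. h \<in> H}) \<or>
                (\<forall>x. R `` {x} = {x + v + h *\<^sub>R u | v h. v \<in> orth c u \<and> h \<in> H})))"
    by (rule partA[OF assms])
next
  fix R :: "(real^4) rel"
  show "(equiv UNIV R \<and> invariant_under (conf_poinc_X c u) R \<and> \<not> trivial_rel R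
               \<and> \<not> (\<forall>x. R `` {x} = {x + t *\<^sub>R u | t. True})) \<longleftrightarrow> R = std_sync c u"
  proof
    assume "equiv UNIV R \<and> invariant_under (conf_poinc_X c u) R \<and> \<not> trivial_rel R
               \<and> \<not> (\<forall>x. R `` {x} = {x + t *\<^sub>R u | t. True})"
    then show "R = std_sync c u" using partB_fwd[OF assms] by blast
  next
    assume "R = std_sync c u"
    then show "equiv UNIV R \<and> invariant_under (conf_poinc_X c u) R \<and> \<not> trivial_rel R
               \<and> \<not> (\<forall>x. R `` {x} = {x + t *\<^sub>R u | t. True})"
      using std_sync_props[OF assms] by simp
  qed
qed


end
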